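(* Let $J_1\in\mathbb{R}$, $J_2>0$, $T>0$, $\beta=1/T$, $a=e^{J_1\beta}$, $b=e^{J_2\beta}$, and $T_c=\frac{2J_2}{\ln 3}$. Consider the fixed points of $F$ lying in $M_1$ (called paramagnetic phases). If $T\ge T_c$, then $F$ has exactly one fixed point in $M_1$. If $T<T_c$, then $F$ has exactly three fixed points in $M_1$ when $b^3\sqrt{\nu_1}<a^{-1}<b^3\sqrt{\nu_2}$, and exactly two when $a^{-1}=b^3\sqrt{\nu_1}$ or $a^{-1}=b^3\sqrt{\nu_2}$, where $$\nu_i=\frac{1}{y_i}\left(\frac{1+y_i}{b^4+y_i}\right)^2,\quad i=1,2,$$ and $y_1<y_2$ are the two positive roots of $y^2+(3-b^4)y+b^4=0$.
   Context: $F:\mathbb{R}^4_+\to\mathbb{R}^4_+$ (positive coordinates) is $F(u)=(u_1',u_2',u_3',u_4')$ with $u_1'=a(bu_1+b^{-1}u_2)^2$, $u_2'=a^{-1}(bu_3+b^{-1}u_4)^2$, $u_3'=a^{-1}(b^{-1}u_1+bu_2)^2$, $u_4'=a(b^{-1}u_3+bu_4)^2$. $M_1=\{u\in\mathbb{R}^4_+:\ u_1=u_4,\ u_2=u_3\}$. This map is the recurrence for the partition functions of the Ising model on the Cayley tree of order 2 with nearest-neighbour coupling $J_1$ and prolonged next-nearest-neighbour coupling $J_2$ at inverse temperature $\beta$. *)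

theory Defs
  imports Complex_Main
begin

definition pos4 :: "(real \<times> real \<times> real \<times> real) set" where
  "pos4 = {(u1,u2,u3,u4). u1 > 0 \<and> u2 > 0 \<and> u3 > 0 \<and> u4 > 0}"

definition Fmap :: "real \<Rightarrow> real \<Rightarrow> real \<times> real \<times> real \<times> real \<Rightarrow> real \<times> real \<times> real \<times> real" where
  "Fmap a b = (\<lambda>(u1,u2,u3,u4).
     (a * (b*u1 + u2/b)^2,
      (1/a) * (b*u3 + u4/b)^2,
      (1/a) * (u1/b + b*u2)^2,
      a * (u3/b + b*u4)^2))"

definition M1 :: "(real \<times> real \<times> real \<times> real) set" where
  "M1 = {(u1,u2,u3,u4). (u1,u2,u3,u4) \<in> pos4 \<and> u1 = u4 \<and> u2 = u3}"

definition para_fixed :: "real \<Rightarrow> real \<Rightarrow> (real \<times> real \<times> real \<times> real) set" where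
  "para_fixed a b = {u \<in> M1. Fmap a b u = u}"

definition nu :: "real \<Rightarrow> real \<Rightarrow> real" where
  "nu b y = (1/y) * ((1 + y) / (b^4 + y))^2"

end

theory Submission
  imports Defs
begin


definition G :: "real \<Rightarrow> real \<Rightarrow> real" where
  "G b w = w*(b^4+w^2)/(1+w^2)"

lemma G_cont: "continuous_on S (G b)"
proof -
  have "\<And>w::real. 1 + w^2 \<noteq> 0" by (smt (verit) zero_le_power2)
  thus ?thesis unfolding G_def by (intro continuous_intros) auto
qed

lemma G_deriv: "DERIV (G b) w :> (w^4+(3-b^4)*w^2+b^4)/(1+w^2)^2"
proof -
  have nz: "1 + w^2 \<noteq> 0" by (smt (verit) zero_le_power2)
  have d: "DERIV (\<lambda>w. w*(b^4+w^2)) w :> b^4+3*w^2"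
    by (rule derivative_eq_intros refl)+ (simp add: algebra_simps power2_eq_square)
  have e: "DERIV (\<lambda>w. 1+w^2) w :> 2*w"
    by (rule derivative_eq_intros refl)+ simp
  have f: "DERIV (G b) w :> ((b^4+3*w^2)*(1+w^2) - w*(b^4+w^2)*(2*w))/((1+w^2)*(1+w^2))"
    unfolding G_def using DERIV_divide[OF d e nz] by simp
  have "(b^4+3*w^2)*(1+w^2) - w*(b^4+w^2)*(2*w) = w^4+(3-b^4)*w^2+b^4"
    by (simp add: algebra_simps power2_eq_square power4_eq_xxxx)
  with f show ?thesis by (simp add: power2_eq_square)
qed

lemma G_inc:
  assumes "u < v" "\<And>w. u < w \<Longrightarrow> w < v \<Longrightarrow> w^4+(3-b^4)*w^2+b^4 > 0"
  shows "G b u < G b v"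
  apply (rule DERIV_pos_imp_increasing_open[OF assms(1) _ G_cont])
proof -
  fix x assume "u < x" "x < v"
  have "1 + x^2 > (0::real)" by (smt (verit) zero_le_power2)
  thus "\<exists>y. DERIV (G b) x :> y \<and> y > 0" using G_deriv assms(2)[OF \<open>u<x\<close> \<open>x<v\<close>] by force
qed

lemma G_dec:
  assumes "u < v" "\<And>w. u < w \<Longrightarrow> w < v \<Longrightarrow> w^4+(3-b^4)*w^2+b^4 < 0"
  shows "G b u > G b v"
  apply (rule DERIV_neg_imp_decreasing_open[OF assms(1) _ G_cont])
proof -
  fix x assume "u < x" "x < v"
  have "1 + x^2 > (0::real)" by (smt (verit) zero_le_power2)
  thus "\<exists>y. DERIV (G b) x :> y \<and> y < 0" using G_deriv assms(2)[OF \<open>u<x\<close> \<open>x<v\<close>]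
    by (metis divide_neg_pos zero_less_power)
qed

lemma G_big: assumes "b^4 > 1" "v > 0" shows "G b v > v"
proof -
  have "v*(1+v^2) < v*(b^4+v^2)" using assms by simp
  thus ?thesis unfolding G_def by (simp add: field_simps add_pos_nonneg)
qed

lemma G0: "G b 0 = 0" by (simp add: G_def)

lemma G_pos: "b > 0 \<Longrightarrow> w > 0 \<Longrightarrow> G b w > 0"
  unfolding G_def by (simp add: add_pos_nonneg)

lemma root_up: assumes "u < v" "G b u < K" "K < G b v"
  shows "\<exists>w. u < w \<and> w < v \<and> G b w = K"
proof -
  obtain w where "u \<le> w" "w \<le> v" "G b w = K" using IVT'[of "G b" u K v] assms G_cont by force
  thus ?thesis using assms by (metis order.order_iff_strict less_irrefl)
qed

lemma root_down: assumes "u < v" "G b u > K" "K > G b v"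
  shows "\<exists>w. u < w \<and> w < v \<and> G b w = K"
proof -
  obtain w where "u \<le> w" "w \<le> v" "G b w = K" using IVT2'[of "G b" v K u] assms G_cont by force
  thus ?thesis using assms by (metis order.order_iff_strict less_irrefl)
qed




lemma fwd:
  fixes a b x y :: real
  assumes ab: "a > 0" "b > 0" and xy: "x > 0" "y > 0"
    and e1: "x = a*(b*x+y/b)^2" and e2: "y = (1/a)*(b*y+x/b)^2"
  shows "\<exists>w>0. G b w = a*b^3 \<and> y = a*b^6/(b^4+w^2)^2 \<and> x = w^2*y/b^2"
proof -
  define w where "w = b*sqrt(x/y)"
  have wpos: "w > 0" using ab xy by (simp add: w_def)
  have w2: "w^2 = b^2*x/y" using xy by (simp add: w_def power_mult_distrib)
  have xw: "x = w^2*y/b^2" using w2 xy ab by (simp add: field_simps)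
  have "b*x+y/b = y*(w^2+1)/b" using xw ab by (simp add: field_simps power2_eq_square)
  hence "x = a*(y*(w^2+1))^2/b^2" using e1 by (simp add: power_divide)
  hence "w^2*y/b^2 = a*(y*(w^2+1))^2/b^2" using xw by simp
  hence "w^2*y = a*(y*(w^2+1))^2" using ab by (simp add: divide_cancel_right)
  moreover have "a*(y*(w^2+1))^2 = (a*y*(w^2+1)^2)*y" by (simp add: power_mult_distrib power2_eq_square)
  ultimately have "w^2*y = (a*y*(w^2+1)^2)*y" by simp
  hence q1: "w^2 = a*y*(w^2+1)^2" using xy by simp
  have "b*y+x/b = y*(b^4+w^2)/b^3" using ab by (simp add: xw field_simps power2_eq_square power3_eq_cube power4_eq_xxxx)
  hence h: "y = (y*(b^4+w^2))^2/(a*b^6)" using e2 ab by (simp add: power_divide power_mult_distrib flip: power_mult)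
  have c: "a*b^6 \<noteq> 0" using ab by simp
  have "y*(a*b^6) = (y*(b^4+w^2))^2" using h nonzero_eq_divide_eq[OF c] by blast
  also have "\<dots> = y*(y*(b^4+w^2)^2)" by (simp add: power2_eq_square)
  finally have q2: "a*b^6 = y*(b^4+w^2)^2" using xy by simp
  have dpos: "b^4+w^2 > 0" using ab by (simp add: add_pos_nonneg)
  have yv: "y = a*b^6/(b^4+w^2)^2" using q2 dpos by (simp add: field_simps)
  have "(w*(b^4+w^2))^2 = (a*b^3*(1+w^2))^2"
  proof -
    have "(w*(b^4+w^2))^2 = w^2*(b^4+w^2)^2" by (simp add: power_mult_distrib)
    also have "\<dots> = (a*y*(w^2+1)^2)*(b^4+w^2)^2" using arg_cong[OF q1, of "\<lambda>t. t*(b^4+w^2)^2"] by (simp only:)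
    also have "\<dots> = a*(w^2+1)^2*(y*(b^4+w^2)^2)" by (simp only: mult_ac)
    also have "\<dots> = a*(w^2+1)^2*(a*b^6)" using q2 by simp
    also have "\<dots> = a^2*(b^3)^2*(w^2+1)^2" by (simp add: power_mult_distrib power2_eq_square flip: power_mult)
    also have "\<dots> = (a*b^3*(1+w^2))^2" by (simp only: power_mult_distrib add.commute[of "w^2" 1])
    finally show ?thesis .
  qed
  moreover have "1+w^2 > 0" by (smt (verit) zero_le_power2)
  moreover have "0 \<le> w*(b^4+w^2)" using wpos dpos by simp
  moreover have "0 \<le> a*b^3*(1+w^2)" using ab calculation(2) by simp
  ultimately have g: "w*(b^4+w^2) = a*b^3*(1+w^2)" by (metis power2_eq_imp_eq)
  have "G b w = a*b^3" unfolding G_def using g \<open>1+w^2 > 0\<close> by simp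
  thus ?thesis using wpos yv xw by (intro exI[of _ w]) simp
qed

lemma bwd:
  fixes a b w :: real
  assumes ab: "a > 0" "b > 0" and w: "w > 0" "G b w = a*b^3"
    and yv: "y = a*b^6/(b^4+w^2)^2" and xv: "x = w^2*y/b^2"
  shows "x > 0 \<and> y > 0 \<and> x = a*(b*x+y/b)^2 \<and> y = (1/a)*(b*y+x/b)^2"
proof -
  have d: "b^4+w^2 > 0" using ab by (simp add: add_pos_nonneg)
  have yp: "y > 0" using yv ab d by simp
  have xp: "x > 0" using xv yp w ab by simp
  have nz: "1+w^2 \<noteq> 0" by (smt (verit) zero_le_power2)
  have g: "w*(b^4+w^2) = a*b^3*(1+w^2)" using w(2) nz unfolding G_def
    by (simp add: field_simps)
  have q2: "a*b^6 = y*(b^4+w^2)^2" using yv d by simp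
  have q1: "w^2 = a*y*(w^2+1)^2"
  proof -
    have "w^2*(b^4+w^2)^2 = (a*b^3*(1+w^2))^2" using g by (metis power_mult_distrib)
    hence "w^2*(b^4+w^2)^2 = a*(1+w^2)^2 * (a*b^6)" by (simp add: power_mult_distrib power2_eq_square flip: power_mult) 
    hence "w^2*(b^4+w^2)^2 = (a*y*(1+w^2)^2) * (b^4+w^2)^2" using q2 by (simp add: algebra_simps)
    thus ?thesis using d by (simp add: algebra_simps)
  qed
  have h1: "b*x+y/b = y*(w^2+1)/b" using xv ab by (simp add: field_simps power2_eq_square)
  have h2: "b*y+x/b = y*(b^4+w^2)/b^3" using ab by (simp add: xv field_simps power2_eq_square power3_eq_cube power4_eq_xxxx)
  have "a*(b*x+y/b)^2 = y*(a*y*(w^2+1)^2)/b^2" unfolding h1 by (simp add: field_simps power2_eq_square)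
  also have "\<dots> = y*w^2/b^2" by (simp only: q1[symmetric])
  also have "\<dots> = x" using xv by (simp add: mult.commute)
  finally have 1: "x = a*(b*x+y/b)^2" ..
  have "(1/a)*(b*y+x/b)^2 = y*(y*(b^4+w^2)^2)/(a*b^6)" unfolding h2 by (simp add: field_simps power2_eq_square power3_eq_cube eval_nat_numeral)
  also have "\<dots> = y" using q2[symmetric] ab by simp
  finally have 2: "y = (1/a)*(b*y+x/b)^2" ..
  show ?thesis using xp yp 1 2 by (intro conjI)
qed




definition R :: "real \<Rightarrow> real \<Rightarrow> real set" where
  "R b K = {w. 0 < w \<and> G b w = K}"

lemma card1:
  assumes b: "b > 0" "b^4 > 1" "b^2 \<le> 3" and K: "K > 0"
  shows "card (R b K) = 1"
proof -
  have P: "w^4+(3-b^4)*w^2+b^4 > 0" if "w \<ge> 0" "w \<noteq> b" for w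
  proof -
    have "w^2 \<noteq> b^2" using that b by (metis power2_eq_imp_eq less_imp_le)
    hence "(w^2-b^2)^2 > 0" by simp
    moreover have "(3-b^2)*(1+b^2)*w^2 \<ge> 0" using b by simp
    moreover have "w^4+(3-b^4)*w^2+b^4 = (w^2-b^2)^2 + (3-b^2)*(1+b^2)*w^2"
      by (simp add: algebra_simps power2_eq_square power4_eq_xxxx)
    ultimately show ?thesis by linarith
  qed
  have inc: "G b u < G b v" if "0 \<le> u" "u < v" for u v
  proof -
    have A: "G b u < G b v" if "0 \<le> u" "u < v" "v \<le> b \<or> b \<le> u" for u v
      by (rule G_inc[OF \<open>u<v\<close>]) (use that in \<open>auto intro!: P\<close>)
    show ?thesis
    proof (cases "v \<le> b \<or> b \<le> u")
      case True thus ?thesis using A that by blast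
    next
      case False
      hence "G b u < G b b" "G b b < G b v" using A[of u b] A[of b v] that b by auto
      thus ?thesis by simp
    qed
  qed
  obtain r where r: "0 < r" "r < K+1" "G b r = K"
    using root_up[of 0 "K+1" b K] G0 G_big[of b "K+1"] K b by auto
  have "R b K = {r}"
  proof
    show "R b K \<subseteq> {r}"
    proof
      fix w assume "w \<in> R b K"
      hence w: "0 < w" "G b w = K" by (auto simp: R_def)
      show "w \<in> {r}"
      proof (rule ccontr)
        assume "w \<notin> {r}"
        hence "w < r \<or> r < w" by auto
        thus False using inc[of w r] inc[of r w] w r by auto
      qed
    qed
    show "{r} \<subseteq> R b K" using r by (auto simp: R_def)
  qed
  thus ?thesis by simp
qed

locale two_crit =
  fixes b y1 y2 :: real
  assumes b: "b > 0" "b^4 > 1"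
    and y: "0 < y1" "y1 < y2" "y1^2 + (3 - b^4) * y1 + b^4 = 0" "y2^2 + (3 - b^4) * y2 + b^4 = 0"
begin

definition "w1 = sqrt y1"
definition "w2 = sqrt y2"

lemma w12: "0 < w1" "w1 < w2" "w1^2 = y1" "w2^2 = y2"
  using y by (auto simp: w1_def w2_def)

lemma vieta: "y1 + y2 = b^4 - 3" "y1 * y2 = b^4"
proof -
  have "(y1 - y2) * (y1 + y2 + (3 - b^4)) = 0" using y by (simp add: algebra_simps power2_eq_square)
  thus s: "y1 + y2 = b^4 - 3" using y by simp
  have e: "3 - b^4 = -(y1+y2)" using s by simp
  have "y1^2 + (-(y1+y2))*y1 + b^4 = 0" using y(3) unfolding e .
  thus "y1 * y2 = b^4" by (simp add: algebra_simps power2_eq_square)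
qed

lemma Pfac: "w^4+(3-b^4)*w^2+b^4 = (w^2-y1)*(w^2-y2)"
proof -
  have e: "3 - b^4 = -(y1+y2)" using vieta by simp
  have "w^4+(3-b^4)*w^2+b^4 = w^4+(-(y1+y2))*w^2+y1*y2" unfolding e vieta(2) ..
  also have "\<dots> = (w^2-y1)*(w^2-y2)" by (simp add: algebra_simps power2_eq_square power4_eq_xxxx)
  finally show ?thesis .
qed

lemma inc1: "0 \<le> u \<Longrightarrow> u < v \<Longrightarrow> v \<le> w1 \<Longrightarrow> G b u < G b v"
proof (rule G_inc)
  fix w assume "0 \<le> u" "u < v" "v \<le> w1" "u < w" "w < v"
  hence "w^2 < w1^2" by (intro power_strict_mono) auto
  hence "w^2 - y1 < 0" "w^2 - y2 < 0" using w12 y by auto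
  thus "w^4+(3-b^4)*w^2+b^4 > 0" unfolding Pfac by (simp add: mult_neg_neg)
qed

lemma dec: "w1 \<le> u \<Longrightarrow> u < v \<Longrightarrow> v \<le> w2 \<Longrightarrow> G b u > G b v"
proof (rule G_dec)
  fix w assume "w1 \<le> u" "u < v" "v \<le> w2" "u < w" "w < v"
  hence "w^2 < w2^2" "w1^2 < w^2" using w12 by (intro power_strict_mono; auto)+
  hence "w^2 - y1 > 0" "w^2 - y2 < 0" using w12 by auto
  thus "w^4+(3-b^4)*w^2+b^4 < 0" unfolding Pfac by (simp add: mult_pos_neg)
qed

lemma inc2: "w2 \<le> u \<Longrightarrow> u < v \<Longrightarrow> G b u < G b v"
proof (rule G_inc)
  fix w assume "w2 \<le> u" "u < v" "u < w" "w < v"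
  hence "w2^2 < w^2" using w12 by (intro power_strict_mono) auto
  hence "w^2 - y1 > 0" "w^2 - y2 > 0" using w12 y by auto
  thus "w^4+(3-b^4)*w^2+b^4 > 0" unfolding Pfac by simp
qed

lemma Gw: "G b w2 < G b w1" using dec[of w1 w2] w12 by simp

lemma root3: assumes "K > 0" "G b w2 \<le> K" obtains r where "w2 \<le> r" "G b r = K"
proof (cases "G b w2 = K")
  case True thus ?thesis using that by blast
next
  case False
  have "G b (w2 + K + 1) > K" using G_big[of b "w2+K+1"] b assms w12 by auto
  then obtain r where "w2 < r" "G b r = K" using root_up[of w2 "w2+K+1" b K] assms False by auto
  thus ?thesis by (intro that[of r]) auto
qed

lemma root1: assumes "K > 0" "K \<le> G b w1" obtains r where "0 < r" "r \<le> w1" "G b r = K"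
proof (cases "G b w1 = K")
  case True thus ?thesis using that w12 by blast
next
  case False
  then obtain r where "0 < r" "r < w1" "G b r = K" using root_up[of 0 w1 b K] assms G0 w12 by auto
  thus ?thesis by (intro that[of r]) auto
qed

lemma root2: assumes "G b w2 \<le> K" "K \<le> G b w1" obtains r where "w1 \<le> r" "r \<le> w2" "G b r = K"
  using IVT2'[of "G b" w2 K w1] assms w12 G_cont that by force

lemma Req: assumes "0 < r1" "r1 \<le> w1" "w1 \<le> r2" "r2 \<le> w2" "w2 \<le> r3"
  and "G b r1 = K" "G b r2 = K" "G b r3 = K"
  shows "R b K = {r1, r2, r3}"
proof
  show "{r1, r2, r3} \<subseteq> R b K" using assms w12 by (auto simp: R_def)
  show "R b K \<subseteq> {r1, r2, r3}"
  proof
    fix w assume "w \<in> R b K"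
    hence w: "0 < w" "G b w = K" by (auto simp: R_def)
    consider "w \<le> w1" | "w1 \<le> w \<and> w \<le> w2" | "w2 \<le> w" by linarith
    thus "w \<in> {r1, r2, r3}"
    proof cases
      case 1
      have "w = r1"
      proof (rule ccontr)
        assume "w \<noteq> r1"
        hence "w < r1 \<or> r1 < w" by auto
        thus False using inc1[of w r1] inc1[of r1 w] w 1 assms by auto
      qed
      thus ?thesis by simp
    next
      case 2
      have "w = r2"
      proof (rule ccontr)
        assume "w \<noteq> r2"
        hence "w < r2 \<or> r2 < w" by auto
        thus False using dec[of w r2] dec[of r2 w] w 2 assms by auto
      qed
      thus ?thesis by simp
    next
      case 3
      have "w = r3"
      proof (rule ccontr)
        assume "w \<noteq> r3"
        hence "w < r3 \<or> r3 < w" by auto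
        thus False using inc2[of w r3] inc2[of r3 w] w 3 assms by auto
      qed
      thus ?thesis by simp
    qed
  qed
qed

lemma card3: assumes "K > 0" "G b w2 < K" "K < G b w1" shows "card (R b K) = 3"
proof -
  obtain r1 where r1: "0 < r1" "r1 \<le> w1" "G b r1 = K" by (rule root1[of K]) (use assms in auto)
  obtain r2 where r2: "w1 \<le> r2" "r2 \<le> w2" "G b r2 = K" by (rule root2[of K]) (use assms in auto)
  obtain r3 where r3: "w2 \<le> r3" "G b r3 = K" by (rule root3[of K]) (use assms in auto)
  have "r1 \<noteq> w1" "r2 \<noteq> w1" "r2 \<noteq> w2" "r3 \<noteq> w2" using r1 r2 r3 assms by auto
  hence "r1 < r2" "r2 < r3" using r1 r2 r3 by auto
  thus ?thesis using Req[OF r1(1,2) r2(1,2) r3(1) r1(3) r2(3) r3(2)] by simp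
qed

lemma card2a: assumes "K = G b w1" shows "card (R b K) = 2"
proof -
  have K: "K > 0" using assms G_pos b w12 by simp
  have "G b w2 < K" using Gw assms by simp
  obtain r3 where r3: "w2 \<le> r3" "G b r3 = K" by (rule root3[of K]) (use K \<open>G b w2 < K\<close> in auto)
  have "r3 \<noteq> w2" using r3 \<open>G b w2 < K\<close> by auto
  hence "R b K = {w1, w1, r3}" using Req[of w1 w1 r3] w12 r3 assms by auto
  moreover have "w1 \<noteq> r3" using r3 w12 by auto
  ultimately show ?thesis by simp
qed

lemma card2b: assumes "K = G b w2" shows "card (R b K) = 2"
proof -
  have K: "K > 0" using assms G_pos b w12 by simp
  have "K < G b w1" using Gw assms by simp
  obtain r1 where r1: "0 < r1" "r1 \<le> w1" "G b r1 = K" by (rule root1[of K]) (use K \<open>K < G b w1\<close> in auto)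
  have "r1 \<noteq> w1" using r1 \<open>K < G b w1\<close> by auto
  hence "R b K = {r1, w2, w2}" using Req[of r1 w2 w2] w12 r1 assms by auto
  moreover have "r1 \<noteq> w2" using r1 w12 by auto
  ultimately show ?thesis by simp
qed

end



definition phi :: "real \<Rightarrow> real \<Rightarrow> real \<Rightarrow> real \<times> real \<times> real \<times> real" where
  "phi a b w = (w^2*(a*b^6/(b^4+w^2)^2)/b^2, a*b^6/(b^4+w^2)^2, a*b^6/(b^4+w^2)^2, w^2*(a*b^6/(b^4+w^2)^2)/b^2)"

lemma para_eq: assumes "a > 0" "b > 0" shows "para_fixed a b = phi a b ` R b (a*b^3)"
proof
  show "para_fixed a b \<subseteq> phi a b ` R b (a*b^3)"
  proof
    fix u assume "u \<in> para_fixed a b"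
    then obtain x y where u: "u = (x,y,y,x)" "x > 0" "y > 0" and fx: "Fmap a b (x,y,y,x) = (x,y,y,x)"
      unfolding para_fixed_def M1_def pos4_def by auto
    have e1: "x = a*(b*x+y/b)^2" and e2: "y = (1/a)*(b*y+x/b)^2" using fx unfolding Fmap_def by auto
    obtain w where "w > 0" "G b w = a*b^3" "y = a*b^6/(b^4+w^2)^2" "x = w^2*y/b^2"
      using fwd[OF assms u(2,3) e1 e2] by blast
    thus "u \<in> phi a b ` R b (a*b^3)" unfolding u(1) phi_def R_def by auto
  qed
  show "phi a b ` R b (a*b^3) \<subseteq> para_fixed a b"
  proof
    fix u assume "u \<in> phi a b ` R b (a*b^3)"
    then obtain w where w: "w > 0" "G b w = a*b^3" and u: "u = phi a b w" unfolding R_def by auto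
    define y where "y = a*b^6/(b^4+w^2)^2"
    define x where "x = w^2*y/b^2"
    have u': "u = (x,y,y,x)" unfolding u phi_def x_def y_def by simp
    have h: "x > 0 \<and> y > 0 \<and> x = a*(b*x+y/b)^2 \<and> y = (1/a)*(b*y+x/b)^2"
      by (rule bwd[OF assms w y_def x_def])
    have "Fmap a b (x,y,y,x) = (x,y,y,x)" unfolding Fmap_def using h
      by (simp add: add.commute mult.commute)
    thus "u \<in> para_fixed a b" unfolding u' para_fixed_def M1_def pos4_def using h by auto
  qed
qed

lemma phi_inj: assumes "a > 0" "b > 0" shows "inj_on (phi a b) (R b K)"
proof
  fix w w' assume w: "w \<in> R b K" "w' \<in> R b K" and eq: "phi a b w = phi a b w'"
  define y where "y = a*b^6/(b^4+w^2)^2"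
  define y' where "y' = a*b^6/(b^4+w'^2)^2"
  have "b^4+w^2 > 0" using assms by (simp add: add_pos_nonneg)
  hence yp: "y > 0" unfolding y_def using assms by simp
  have yy: "y = y'" using eq unfolding phi_def y_def y'_def by simp
  have "w^2*y/b^2 = w'^2*y'/b^2" using eq unfolding phi_def y_def y'_def by simp
  hence "w^2 = w'^2" using yy yp assms by simp
  thus "w = w'" using w unfolding R_def by (auto intro: power2_eq_imp_eq less_imp_le)
qed

lemma card_para: assumes "a > 0" "b > 0" shows "card (para_fixed a b) = card (R b (a*b^3))"
  using para_eq[OF assms] phi_inj[OF assms] card_image by metis

lemma sqrt_nu: assumes "y > 0" "b > 0" shows "sqrt (nu b y) = 1 / G b (sqrt y)"
proof -
  have d: "b^4 + y > 0" using assms by (simp add: add_pos_nonneg)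
  have "nu b y = (1 / G b (sqrt y))^2"
    unfolding nu_def G_def using assms d by (simp add: power_divide power_mult_distrib)
  moreover have "G b (sqrt y) > 0" using G_pos assms by simp
  ultimately show ?thesis by simp
qed




theorem theorem1:
  fixes J1 J2 T a b Tc :: real
  assumes "J2 > 0" and "T > 0"
    and "a = exp (J1 * (1/T))" and "b = exp (J2 * (1/T))"
    and "Tc = 2 * J2 / ln 3"
  shows "(T \<ge> Tc \<longrightarrow> card (para_fixed a b) = 1) \<and>
         (T < Tc \<longrightarrow>
            (\<forall>y1 y2. 0 < y1 \<and> y1 < y2 \<and>
                y1^2 + (3 - b^4) * y1 + b^4 = 0 \<and>
                y2^2 + (3 - b^4) * y2 + b^4 = 0 \<longrightarrow>
              (b^3 * sqrt (nu b y1) < 1/a \<and> 1/a < b^3 * sqrt (nu b y2)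
                 \<longrightarrow> card (para_fixed a b) = 3) \<and>
              (1/a = b^3 * sqrt (nu b y1) \<or> 1/a = b^3 * sqrt (nu b y2)
                 \<longrightarrow> card (para_fixed a b) = 2)))"
proof -
  have a: "a > 0" using assms by simp
  have b1: "b > 1" using assms by simp
  hence b: "b > 0" by simp
  have b4: "b^4 > 1" using b1 by (simp add: one_less_power)
  have K: "a*b^3 > 0" using a b by simp
  have cp: "card (para_fixed a b) = card (R b (a*b^3))" using card_para[OF a b] .
  have ln3: "ln (3::real) > 0" by simp
  have b2: "b^2 = exp (2*J2/T)" using assms by (simp add: power2_eq_square flip: exp_add)
  have Tiff: "T \<ge> Tc \<longleftrightarrow> b^2 \<le> 3"
  proof -
    have "T \<ge> Tc \<longleftrightarrow> 2*J2 \<le> ln 3 * T" using assms ln3 by (simp add: divide_le_eq mult.commute)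
    also have "\<dots> \<longleftrightarrow> 2*J2/T \<le> ln 3" using assms by (simp add: divide_le_eq)
    also have "\<dots> \<longleftrightarrow> exp (2*J2/T) \<le> exp (ln 3)" by (simp only: exp_le_cancel_iff)
    also have "\<dots> \<longleftrightarrow> b^2 \<le> 3" using b2 by simp
    finally show ?thesis .
  qed
  show ?thesis
  proof (intro conjI impI allI)
    assume "T \<ge> Tc"
    hence "b^2 \<le> 3" using Tiff by simp
    thus "card (para_fixed a b) = 1" using cp card1[OF b b4 _ K] by simp
  next
    fix y1 y2
    assume "0 < y1 \<and> y1 < y2 \<and> y1^2 + (3 - b^4) * y1 + b^4 = 0 \<and> y2^2 + (3 - b^4) * y2 + b^4 = 0"
    then interpret tc: two_crit b y1 y2 using b b4 by unfold_locales auto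
    have G1: "G b tc.w1 > 0" "G b tc.w2 > 0" using G_pos b tc.w12 by auto
    have s1: "b^3 * sqrt (nu b y1) = b^3 / G b tc.w1" using sqrt_nu[of y1 b] tc.y b unfolding tc.w1_def by simp
    have s2: "b^3 * sqrt (nu b y2) = b^3 / G b tc.w2" using sqrt_nu[of y2 b] tc.y b unfolding tc.w2_def by simp
    {
      assume "b^3 * sqrt (nu b y1) < 1/a \<and> 1/a < b^3 * sqrt (nu b y2)"
      hence "b^3 / G b tc.w1 < 1/a" "1/a < b^3 / G b tc.w2" using s1 s2 by auto
      hence "a*b^3 < G b tc.w1" "G b tc.w2 < a*b^3" using G1 a by (auto simp: field_simps)
      thus "card (para_fixed a b) = 3" using cp tc.card3[OF K] by simp
    }
    {
      assume "1/a = b^3 * sqrt (nu b y1) \<or> 1/a = b^3 * sqrt (nu b y2)"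
      hence "1/a = b^3 / G b tc.w1 \<or> 1/a = b^3 / G b tc.w2" using s1 s2 by auto
      hence "a*b^3 = G b tc.w1 \<or> a*b^3 = G b tc.w2" using G1 a by (auto simp: field_simps)
      thus "card (para_fixed a b) = 2" using cp tc.card2a tc.card2b by auto
    }
  qed
qed


end
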